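(* Let $B,D\in\mathrm{Mat}_{m\times m}(\mathbb{R})$ and let $f\in C^\infty(\mathbb{R}^m)$ with $f(u)\neq 0$ for all $u$. Set $\mathbf{B}(u)=f(u)B$ and $\mathbf{D}(u)=f(u)D$, and let $L_{(\mathbf{B},\mathbf{D}^t)}\subset T\mathbb{R}^m\oplus T^*\mathbb{R}^m$ be the subbundle with fibre $L_{(\mathbf{B},\mathbf{D}^t)}(u)=\{(\mathbf{B}(u)z,\mathbf{D}^t(u)z): z\in\mathbb{R}^m\}$ at each $u\in\mathbb{R}^m$. Then $L_{(\mathbf{B},\mathbf{D}^t)}$ is a big-isotropic structure if and only if $DB+B^tD^t=0$, and it is a Dirac structure if and only if $DB+B^tD^t=0$ and $\ker B\cap\ker D^t=\{0\}$.
   Context: For a manifold $M$, $\mathbb{T}M=TM\oplus T^*M$ carries the pairing $\langle\langle (X,\alpha),(Y,\beta)\rangle\rangle=\frac12(\beta(X)+\alpha(Y))$. For a linear subbundle $L$, $L^\perp=\{(X,\alpha): \langle\langle (X,\alpha),(Y,\beta)\rangle\rangle=0\ \forall (Y,\beta)\in L\}$; $L$ is isotropic if $L\subseteq L^\perp$ and maximal isotropic if $L=L^\perp$. The Courant bracket of sections is $[(X,\alpha),(Y,\beta)]=\big([X,Y],\ \mathcal{L}_X\beta-\mathcal{L}_Y\alpha+\frac12 d(\alpha(Y)-\beta(X))\big)$. A big-isotropic structure is an isotropic linear subbundle whose space of sections is closed under the Courant bracket; a Dirac structure is a maximal isotropic linear subbundle whose sections are closed under the Courant bracket. Vectors and covectors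 on $\mathbb{R}^m$ are identified with column vectors in $\mathbb{R}^m$ via the canonical basis. *)

theory Defs
  imports "HOL-Analysis.Analysis"
begin

definition pd :: "(real^'m \<Rightarrow> real) \<Rightarrow> 'm \<Rightarrow> real^'m \<Rightarrow> real" where
  "pd g i u = frechet_derivative g (at u) (axis i 1)"

fun Ck :: "nat \<Rightarrow> (real^'m \<Rightarrow> real) \<Rightarrow> bool" where
  "Ck 0 g = continuous_on UNIV g"
| "Ck (Suc k) g = ((\<forall>x. g differentiable (at x)) \<and> (\<forall>i. Ck k (\<lambda>x. pd g i x)))"

definition smooth_fun :: "(real^'m \<Rightarrow> real) \<Rightarrow> bool" where
  "smooth_fun g = (\<forall>k. Ck k g)"

definition smooth_vec :: "(real^'m \<Rightarrow> real^'n) \<Rightarrow> bool" where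
  "smooth_vec F = (\<forall>j. smooth_fun (\<lambda>x. F x $ j))"

definition smooth_sec :: "(real^'m \<Rightarrow> (real^'m) \<times> (real^'m)) \<Rightarrow> bool" where
  "smooth_sec s = (smooth_vec (\<lambda>x. fst (s x)) \<and> smooth_vec (\<lambda>x. snd (s x)))"

definition vpd :: "(real^'m \<Rightarrow> real^'n) \<Rightarrow> 'm \<Rightarrow> real^'m \<Rightarrow> real^'n" where
  "vpd F i u = (\<chi> j. pd (\<lambda>x. F x $ j) i u)"

definition lie_bracket :: "(real^'m \<Rightarrow> real^'m) \<Rightarrow> (real^'m \<Rightarrow> real^'m) \<Rightarrow> real^'m \<Rightarrow> real^'m" where
  "lie_bracket X Y u = (\<Sum>i\<in>UNIV. (X u $ i) *\<^sub>R vpd Y i u) - (\<Sum>i\<in>UNIV. (Y u $ i) *\<^sub>R vpd X i u)"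

definition lie_deriv :: "(real^'m \<Rightarrow> real^'m) \<Rightarrow> (real^'m \<Rightarrow> real^'m) \<Rightarrow> real^'m \<Rightarrow> real^'m" where
  "lie_deriv X \<beta> u = (\<Sum>i\<in>UNIV. (X u $ i) *\<^sub>R vpd \<beta> i u)
      + (\<chi> j. \<Sum>i\<in>UNIV. \<beta> u $ i * pd (\<lambda>x. X x $ i) j u)"

definition ext_d :: "(real^'m \<Rightarrow> real) \<Rightarrow> real^'m \<Rightarrow> real^'m" where
  "ext_d g u = (\<chi> j. pd g j u)"

definition courant :: "(real^'m \<Rightarrow> (real^'m) \<times> (real^'m)) \<Rightarrow> (real^'m \<Rightarrow> (real^'m) \<times> (real^'m))
    \<Rightarrow> real^'m \<Rightarrow> (real^'m) \<times> (real^'m)" where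
  "courant s t u =
    (let X = (\<lambda>x. fst (s x)); \<alpha> = (\<lambda>x. snd (s x)); Y = (\<lambda>x. fst (t x)); \<beta> = (\<lambda>x. snd (t x)) in
     (lie_bracket X Y u,
      lie_deriv X \<beta> u - lie_deriv Y \<alpha> u
        + (1/2) *\<^sub>R ext_d (\<lambda>x. \<alpha> x \<bullet> Y x - \<beta> x \<bullet> X x) u))"

text \<open>The symmetric pairing; covectors identified with column vectors, so beta(X) = beta . X.\<close>
definition pairing :: "(real^'m) \<times> (real^'m) \<Rightarrow> (real^'m) \<times> (real^'m) \<Rightarrow> real" where
  "pairing w v = (1/2) * (snd v \<bullet> fst w + snd w \<bullet> fst v)"

definition perp :: "(real^'m \<Rightarrow> ((real^'m) \<times> (real^'m)) set) \<Rightarrow> real^'m \<Rightarrow> ((real^'m) \<times> (real^'m)) set" where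
  "perp L u = {w. \<forall>v\<in>L u. pairing w v = 0}"

definition is_section :: "(real^'m \<Rightarrow> ((real^'m) \<times> (real^'m)) set) \<Rightarrow> (real^'m \<Rightarrow> (real^'m) \<times> (real^'m)) \<Rightarrow> bool" where
  "is_section L s = (smooth_sec s \<and> (\<forall>u. s u \<in> L u))"

definition linear_subbundle :: "(real^'m \<Rightarrow> ((real^'m) \<times> (real^'m)) set) \<Rightarrow> bool" where
  "linear_subbundle L = ((\<forall>u. subspace (L u)) \<and> (\<exists>k. \<forall>u. dim (L u) = k)
      \<and> (\<forall>u. \<forall>w\<in>L u. \<exists>s. is_section L s \<and> s u = w))"

definition isotropic :: "(real^'m \<Rightarrow> ((real^'m) \<times> (real^'m)) set) \<Rightarrow> bool" where
  "isotropic L = (\<forall>u. L u \<subseteq> perp L u)"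

definition maximal_isotropic :: "(real^'m \<Rightarrow> ((real^'m) \<times> (real^'m)) set) \<Rightarrow> bool" where
  "maximal_isotropic L = (\<forall>u. L u = perp L u)"

definition courant_closed :: "(real^'m \<Rightarrow> ((real^'m) \<times> (real^'m)) set) \<Rightarrow> bool" where
  "courant_closed L = (\<forall>s t. is_section L s \<longrightarrow> is_section L t \<longrightarrow> is_section L (courant s t))"

definition big_isotropic :: "(real^'m \<Rightarrow> ((real^'m) \<times> (real^'m)) set) \<Rightarrow> bool" where
  "big_isotropic L = (linear_subbundle L \<and> isotropic L \<and> courant_closed L)"

definition dirac :: "(real^'m \<Rightarrow> ((real^'m) \<times> (real^'m)) set) \<Rightarrow> bool" where
  "dirac L = (linear_subbundle L \<and> maximal_isotropic L \<and> courant_closed L)"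

end

theory Submission
  imports Defs
begin

lemma pd_add:
  assumes "f differentiable (at u)" "g differentiable (at u)"
  shows "pd (\<lambda>x. f x + g x) i u = pd f i u + pd g i u"
proof -
  have "((\<lambda>x. f x + g x) has_derivative
     (\<lambda>h. frechet_derivative f (at u) h + frechet_derivative g (at u) h)) (at u)"
    using assms by (intro has_derivative_add) (simp_all add: frechet_derivative_works[symmetric])
  from frechet_derivative_at[OF this] show ?thesis
    unfolding pd_def by (metis)
qed

lemma pd_mult:
  assumes "f differentiable (at u)" "g differentiable (at u)"
  shows "pd (\<lambda>x. f x * g x) i u = f u * pd g i u + pd f i u * g u"
proof -
  have "((\<lambda>x. f x * g x) has_derivative
     (\<lambda>h. f u * frechet_derivative g (at u) h + frechet_derivative f (at u) h * g u)) (at u)"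
    using assms by (intro has_derivative_mult) (simp_all add: frechet_derivative_works[symmetric])
  from frechet_derivative_at[OF this] show ?thesis
    unfolding pd_def by (metis)
qed

lemma pd_const: "pd (\<lambda>x. c) i u = 0"
  unfolding pd_def by simp

lemma Ck_const: "Ck k (\<lambda>x::real^'m. c)"
proof (induction k arbitrary: c)
  case 0 then show ?case by simp
next
  case (Suc k)
  have "(\<lambda>x. pd (\<lambda>x::real^'m. c) i x) = (\<lambda>x. 0)" for i by (simp add: pd_const)
  then show ?case using Suc by simp
qed

lemma Ck_diff: "Ck (Suc k) f \<Longrightarrow> f differentiable (at x)"
  by simp

lemma Ck_mono: "Ck (Suc k) (f::real^'m \<Rightarrow> real) \<Longrightarrow> Ck k f"
proof (induction k arbitrary: f)
  case 0
  then have "f differentiable_on UNIV"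
    by (simp add: differentiable_at_imp_differentiable_on)
  then show ?case by (simp add: differentiable_imp_continuous_on)
next
  case (Suc k)
  then show ?case by (metis Ck.simps(2))
qed

lemma Ck_add: "Ck k (f::real^'m \<Rightarrow> real) \<Longrightarrow> Ck k g \<Longrightarrow> Ck k (\<lambda>x. f x + g x)"
proof (induction k arbitrary: f g)
  case 0 then show ?case by (simp add: continuous_on_add)
next
  case (Suc k)
  have eq: "(\<lambda>x. pd (\<lambda>x. f x + g x) i x) = (\<lambda>x. pd f i x + pd g i x)" for i
    using Suc.prems by (simp add: pd_add)
  show ?case using Suc by (simp add: eq)
qed

lemma Ck_mult: "Ck k (f::real^'m \<Rightarrow> real) \<Longrightarrow> Ck k g \<Longrightarrow> Ck k (\<lambda>x. f x * g x)"
proof (induction k arbitrary: f g)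
  case 0 then show ?case by (simp add: continuous_on_mult)
next
  case (Suc k)
  have eq: "(\<lambda>x. pd (\<lambda>x. f x * g x) i x) = (\<lambda>x. f x * pd g i x + pd f i x * g x)" for i
    using Suc.prems by (simp add: pd_mult)
  have "Ck k f" "Ck k g" using Suc.prems Ck_mono by blast+
  then show ?case using Suc by (simp add: eq Ck_add)
qed

lemma smooth_const: "smooth_fun (\<lambda>x. c)"
  unfolding smooth_fun_def by (simp add: Ck_const)

lemma smooth_add: "smooth_fun f \<Longrightarrow> smooth_fun g \<Longrightarrow> smooth_fun (\<lambda>x. f x + g x)"
  unfolding smooth_fun_def by (simp add: Ck_add)

lemma smooth_mult: "smooth_fun f \<Longrightarrow> smooth_fun g \<Longrightarrow> smooth_fun (\<lambda>x. f x * g x)"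
  unfolding smooth_fun_def by (simp add: Ck_mult)

lemma smooth_minus: "smooth_fun f \<Longrightarrow> smooth_fun g \<Longrightarrow> smooth_fun (\<lambda>x. f x - g x)"
proof -
  assume a: "smooth_fun f" "smooth_fun g"
  have "smooth_fun (\<lambda>x. f x + (-1) * g x)"
    by (intro smooth_add smooth_mult a smooth_const)
  then show ?thesis by simp
qed

lemma smooth_sum: "(\<And>i. smooth_fun (F i)) \<Longrightarrow> smooth_fun (\<lambda>x. \<Sum>i\<in>(A::'a set). F i x)"
proof (induction A rule: infinite_finite_induct)
  case (infinite A) then show ?case by (simp add: smooth_const)
next
  case empty then show ?case by (simp add: smooth_const)
next
  case (insert a A) then show ?case by (simp add: smooth_add)
qed

lemma smooth_pd: "smooth_fun f \<Longrightarrow> smooth_fun (\<lambda>x. pd f i x)"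
  unfolding smooth_fun_def by (metis Ck.simps(2))

lemma smooth_diff: "smooth_fun f \<Longrightarrow> f differentiable (at x)"
  unfolding smooth_fun_def by (metis Ck.simps(2))


lemma pd_sum:
  assumes "\<And>k. k \<in> A \<Longrightarrow> F k differentiable (at u)"
  shows "pd (\<lambda>x. \<Sum>k\<in>A. F k x) i u = (\<Sum>k\<in>A. pd (F k) i u)"
proof -
  have "((\<lambda>x. \<Sum>k\<in>A. F k x) has_derivative
     (\<lambda>h. \<Sum>k\<in>A. frechet_derivative (F k) (at u) h)) (at u)"
    using assms by (intro has_derivative_sum) (simp_all add: frechet_derivative_works[symmetric])
  from frechet_derivative_at[OF this] show ?thesis
    unfolding pd_def by (metis)
qed

lemma pd_diff:
  assumes "f differentiable (at u)" "g differentiable (at u)"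
  shows "pd (\<lambda>x. f x - g x) i u = pd f i u - pd g i u"
proof -
  have "((\<lambda>x. f x - g x) has_derivative
     (\<lambda>h. frechet_derivative f (at u) h - frechet_derivative g (at u) h)) (at u)"
    using assms by (intro has_derivative_diff) (simp_all add: frechet_derivative_works[symmetric])
  from frechet_derivative_at[OF this] show ?thesis
    unfolding pd_def by (metis)
qed

lemma pd_zero_fun:
  assumes "\<And>x. f x = 0"
  shows "pd f i u = 0"
proof -
  have "f = (\<lambda>x. 0)" using assms by auto
  then show ?thesis by (simp add: pd_const)
qed

lemma pd_cmult:
  assumes "f differentiable (at u)"
  shows "pd (\<lambda>x. c * f x) i u = c * pd f i u"
  using pd_mult[of "\<lambda>x. c" u f i] assms by (simp add: pd_const)

lemma pd_inner:
  assumes "\<And>k. (\<lambda>x. F x $ k) differentiable (at u)" "\<And>k. (\<lambda>x. G x $ k) differentiable (at u)"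
  shows "pd (\<lambda>x. F x \<bullet> G x) j u
     = (\<Sum>k\<in>UNIV. F u $ k * pd (\<lambda>x. G x $ k) j u + pd (\<lambda>x. F x $ k) j u * G u $ k)"
proof -
  have "pd (\<lambda>x. F x \<bullet> G x) j u = pd (\<lambda>x. \<Sum>k\<in>UNIV. F x $ k * G x $ k) j u"
    by (simp add: inner_vec_def)
  also have "\<dots> = (\<Sum>k\<in>UNIV. pd (\<lambda>x. F x $ k * G x $ k) j u)"
    using assms by (intro pd_sum) (simp add: differentiable_mult)
  also have "\<dots> = (\<Sum>k\<in>UNIV. F u $ k * pd (\<lambda>x. G x $ k) j u + pd (\<lambda>x. F x $ k) j u * G u $ k)"
    using assms by (simp add: pd_mult)
  finally show ?thesis .
qed

lemma vpd_comp: "vpd F i u $ j = pd (\<lambda>x. F x $ j) i u"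
  by (simp add: vpd_def)

lemma sec_diff:
  assumes "smooth_sec s"
  shows "(\<lambda>x. fst (s x) $ k) differentiable (at u)" "(\<lambda>x. snd (s x) $ k) differentiable (at u)"
  using assms smooth_diff unfolding smooth_sec_def smooth_vec_def by blast+

lemma sec_smooth:
  assumes "smooth_sec s"
  shows "smooth_fun (\<lambda>x. fst (s x) $ k)" "smooth_fun (\<lambda>x. snd (s x) $ k)"
  using assms unfolding smooth_sec_def smooth_vec_def by blast+

lemma deriv_in_V:
  fixes V :: "((real^'m) \<times> (real^'m)) set"
  assumes subV: "subspace V" and s: "smooth_sec s" "\<And>x. s x \<in> V"
  shows "(vpd (\<lambda>x. fst (s x)) i u, vpd (\<lambda>x. snd (s x)) i u) \<in> V"
proof -
  have "(vpd (\<lambda>x. fst (s x)) i u, vpd (\<lambda>x. snd (s x)) i u) \<in> orthogonal_comp (orthogonal_comp V)"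
    unfolding orthogonal_comp_def orthogonal_def mem_Collect_eq
  proof (intro ballI)
    fix c assume "c \<in> {x. \<forall>y\<in>V. y \<bullet> x = 0}"
    then have c: "\<forall>y\<in>V. c \<bullet> y = 0" by (simp add: inner_commute)
    obtain c1 c2 where cc: "c = (c1, c2)" by fastforce
    have h0: "(\<Sum>k\<in>UNIV. c1 $ k * fst (s x) $ k) + (\<Sum>k\<in>UNIV. c2 $ k * snd (s x) $ k) = 0" for x
    proof -
      have "c \<bullet> s x = 0" using c s(2) by (metis inner_commute)
      moreover obtain p q where "s x = (p, q)" by fastforce
      ultimately show ?thesis using cc by (simp add: inner_vec_def)
    qed
    have "0 = pd (\<lambda>x. (\<Sum>k\<in>UNIV. c1 $ k * fst (s x) $ k) + (\<Sum>k\<in>UNIV. c2 $ k * snd (s x) $ k)) i u"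
      using h0 by (simp add: pd_zero_fun)
    also have "\<dots> = (\<Sum>k\<in>UNIV. c1 $ k * pd (\<lambda>x. fst (s x) $ k) i u) + (\<Sum>k\<in>UNIV. c2 $ k * pd (\<lambda>x. snd (s x) $ k) i u)"
      using sec_diff[OF s(1)]
      by (simp add: pd_add pd_sum pd_cmult differentiable_sum differentiable_mult)
    finally show "c \<bullet> (vpd (\<lambda>x. fst (s x)) i u, vpd (\<lambda>x. snd (s x)) i u) = 0"
      using cc by (simp add: inner_vec_def vpd_comp)
  qed
  then show ?thesis using orthogonal_comp_self[OF subV] by simp
qed


lemma inner_differentiable:
  assumes "\<And>k. (\<lambda>x. F x $ k) differentiable (at u)" "\<And>k. (\<lambda>x. G x $ k) differentiable (at u)"
  shows "(\<lambda>x. F x \<bullet> G x) differentiable (at u)"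
  unfolding inner_vec_def inner_real_def
  using assms by (intro differentiable_sum differentiable_mult) auto

lemma courant_in_V:
  fixes V :: "((real^'m) \<times> (real^'m)) set"
  assumes subV: "subspace V" and iso: "\<And>v w. v \<in> V \<Longrightarrow> w \<in> V \<Longrightarrow> pairing v w = 0"
    and s: "smooth_sec s" "\<And>x. s x \<in> V" and t: "smooth_sec t" "\<And>x. t x \<in> V"
  shows "courant s t u \<in> V"
proof -
  define X where "X = (\<lambda>x. fst (s x))"
  define A where "A = (\<lambda>x. snd (s x))"
  define Y where "Y = (\<lambda>x. fst (t x))"
  define Bt where "Bt = (\<lambda>x. snd (t x))"
  have dX: "\<And>k. (\<lambda>x. X x $ k) differentiable (at u)" "\<And>k. (\<lambda>x. A x $ k) differentiable (at u)"
    using sec_diff[OF s(1)] unfolding X_def A_def by auto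
  have dY: "\<And>k. (\<lambda>x. Y x $ k) differentiable (at u)" "\<And>k. (\<lambda>x. Bt x $ k) differentiable (at u)"
    using sec_diff[OF t(1)] unfolding Y_def Bt_def by auto
  have VX: "\<And>i. (vpd X i u, vpd A i u) \<in> V"
    using deriv_in_V[OF subV s] unfolding X_def A_def by auto
  have VY: "\<And>i. (vpd Y i u, vpd Bt i u) \<in> V"
    using deriv_in_V[OF subV t] unfolding Y_def Bt_def by auto
  have sV: "(X u, A u) \<in> V" using s(2)[of u] unfolding X_def A_def by simp
  have tV: "(Y u, Bt u) \<in> V" using t(2)[of u] unfolding Y_def Bt_def by simp
  have isoX: "(\<Sum>k\<in>UNIV. Bt u $ k * vpd X j u $ k) + (\<Sum>k\<in>UNIV. vpd A j u $ k * Y u $ k) = 0" for j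
    using iso[OF VX tV] by (simp add: pairing_def inner_vec_def)
  have isoY: "(\<Sum>k\<in>UNIV. A u $ k * vpd Y j u $ k) + (\<Sum>k\<in>UNIV. vpd Bt j u $ k * X u $ k) = 0" for j
    using iso[OF VY sV] by (simp add: pairing_def inner_vec_def)
  have pdg: "pd (\<lambda>x. A x \<bullet> Y x - Bt x \<bullet> X x) j u =
     (\<Sum>k\<in>UNIV. A u $ k * vpd Y j u $ k + vpd A j u $ k * Y u $ k)
     - (\<Sum>k\<in>UNIV. Bt u $ k * vpd X j u $ k + vpd Bt j u $ k * X u $ k)" for j
    using dX dY by (simp add: pd_diff pd_inner inner_differentiable vpd_comp)
  have eq: "courant s t u = (\<Sum>i\<in>UNIV. X u $ i *\<^sub>R (vpd Y i u, vpd Bt i u))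
       - (\<Sum>i\<in>UNIV. Y u $ i *\<^sub>R (vpd X i u, vpd A i u))"
  proof (rule prod_eqI)
    show "fst (courant s t u) = fst ((\<Sum>i\<in>UNIV. X u $ i *\<^sub>R (vpd Y i u, vpd Bt i u))
       - (\<Sum>i\<in>UNIV. Y u $ i *\<^sub>R (vpd X i u, vpd A i u)))"
      unfolding courant_def Let_def lie_bracket_def X_def Y_def A_def Bt_def
      by (simp add: fst_sum)
  next
    have sc: "snd (courant s t u) = lie_deriv X Bt u - lie_deriv Y A u
        + (1/2) *\<^sub>R ext_d (\<lambda>x. A x \<bullet> Y x - Bt x \<bullet> X x) u"
      unfolding courant_def Let_def X_def Y_def A_def Bt_def by simp
    show "snd (courant s t u) = snd ((\<Sum>i\<in>UNIV. X u $ i *\<^sub>R (vpd Y i u, vpd Bt i u))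
       - (\<Sum>i\<in>UNIV. Y u $ i *\<^sub>R (vpd X i u, vpd A i u)))"
      unfolding sc
    proof (subst vec_eq_iff, intro allI)
      fix j
      have e1: "(\<Sum>i\<in>UNIV. Bt u $ i * pd (\<lambda>x. X x $ i) j u) = (\<Sum>k\<in>UNIV. Bt u $ k * vpd X j u $ k)"
        by (simp add: vpd_comp)
      have e2: "(\<Sum>i\<in>UNIV. A u $ i * pd (\<lambda>x. Y x $ i) j u) = (\<Sum>k\<in>UNIV. A u $ k * vpd Y j u $ k)"
        by (simp add: vpd_comp)
      show "(lie_deriv X Bt u - lie_deriv Y A u
        + (1/2) *\<^sub>R ext_d (\<lambda>x. A x \<bullet> Y x - Bt x \<bullet> X x) u) $ j =
        snd ((\<Sum>i\<in>UNIV. X u $ i *\<^sub>R (vpd Y i u, vpd Bt i u))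
       - (\<Sum>i\<in>UNIV. Y u $ i *\<^sub>R (vpd X i u, vpd A i u))) $ j"
        using isoX[of j] isoY[of j]
        apply (simp add: lie_deriv_def ext_d_def pdg snd_sum vpd_comp)
        apply (simp only: sum.distrib)
        apply (simp add: field_simps)
        done
    qed
  qed
  have "(\<Sum>i\<in>UNIV. X u $ i *\<^sub>R (vpd Y i u, vpd Bt i u)) \<in> V"
    using VY subV by (intro subspace_sum subspace_scale) auto
  moreover have "(\<Sum>i\<in>UNIV. Y u $ i *\<^sub>R (vpd X i u, vpd A i u)) \<in> V"
    using VX subV by (intro subspace_sum subspace_scale) auto
  ultimately show ?thesis using eq subV by (simp add: subspace_diff)
qed


lemma smooth_inner:
  assumes "\<And>k. smooth_fun (\<lambda>x. F x $ k)" "\<And>k. smooth_fun (\<lambda>x. G x $ k)"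
  shows "smooth_fun (\<lambda>x. F x \<bullet> G x)"
  unfolding inner_vec_def inner_real_def
  using assms by (intro smooth_sum smooth_mult) auto

lemma smooth_courant:
  assumes s: "smooth_sec s" and t: "smooth_sec t"
  shows "smooth_sec (courant s t)"
proof -
  note ss = sec_smooth[OF s] and st = sec_smooth[OF t]
  have f: "smooth_fun (\<lambda>x. fst (courant s t x) $ j)" for j
  proof -
    have "(\<lambda>x. fst (courant s t x) $ j) = (\<lambda>x. (\<Sum>i\<in>UNIV. fst (s x) $ i * pd (\<lambda>x. fst (t x) $ j) i x)
         - (\<Sum>i\<in>UNIV. fst (t x) $ i * pd (\<lambda>x. fst (s x) $ j) i x))"
      by (simp add: courant_def Let_def lie_bracket_def vpd_def sum_component)
    moreover have "smooth_fun (\<lambda>x. (\<Sum>i\<in>UNIV. fst (s x) $ i * pd (\<lambda>x. fst (t x) $ j) i x)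
         - (\<Sum>i\<in>UNIV. fst (t x) $ i * pd (\<lambda>x. fst (s x) $ j) i x))"
      using ss st by (intro smooth_minus smooth_sum smooth_mult smooth_pd) auto
    ultimately show ?thesis by simp
  qed
  have g: "smooth_fun (\<lambda>x. snd (courant s t x) $ j)" for j
  proof -
    have "(\<lambda>x. snd (courant s t x) $ j) = (\<lambda>x.
           (\<Sum>i\<in>UNIV. fst (s x) $ i * pd (\<lambda>x. snd (t x) $ j) i x)
         + (\<Sum>i\<in>UNIV. snd (t x) $ i * pd (\<lambda>x. fst (s x) $ i) j x)
         - ((\<Sum>i\<in>UNIV. fst (t x) $ i * pd (\<lambda>x. snd (s x) $ j) i x)
         + (\<Sum>i\<in>UNIV. snd (s x) $ i * pd (\<lambda>x. fst (t x) $ i) j x))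
         + (1/2) * pd (\<lambda>x. snd (s x) \<bullet> fst (t x) - snd (t x) \<bullet> fst (s x)) j x)"
      by (simp add: courant_def Let_def lie_deriv_def ext_d_def vpd_def sum_component)
    moreover have "smooth_fun (\<lambda>x.
           (\<Sum>i\<in>UNIV. fst (s x) $ i * pd (\<lambda>x. snd (t x) $ j) i x)
         + (\<Sum>i\<in>UNIV. snd (t x) $ i * pd (\<lambda>x. fst (s x) $ i) j x)
         - ((\<Sum>i\<in>UNIV. fst (t x) $ i * pd (\<lambda>x. snd (s x) $ j) i x)
         + (\<Sum>i\<in>UNIV. snd (s x) $ i * pd (\<lambda>x. fst (t x) $ i) j x))
         + (1/2) * pd (\<lambda>x. snd (s x) \<bullet> fst (t x) - snd (t x) \<bullet> fst (s x)) j x)"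
      using ss st
      by (intro smooth_add smooth_minus smooth_sum smooth_mult smooth_pd smooth_const smooth_inner) auto
    ultimately show ?thesis by simp
  qed
  show ?thesis unfolding smooth_sec_def smooth_vec_def using f g by blast
qed

lemma noninj_dim:
  fixes N :: "'a::euclidean_space \<Rightarrow> 'b::euclidean_space"
  assumes lin: "linear N" and ni: "\<not> inj N"
  shows "dim (range N) < DIM('a)"
proof -
  obtain z0 where z0: "N z0 = 0" "z0 \<noteq> 0" using ni lin linear_injective_0 by blast
  have ind0: "independent {z0}" using z0 by simp
  define S where "S = extend_basis {z0}"
  have indS: "independent S" and spS: "span S = UNIV" and zS: "z0 \<in> S"
    using independent_extend_basis[OF ind0] span_extend_basis[OF ind0] extend_basis_superset[OF ind0]
    unfolding S_def by auto
  have finS: "finite S" using independent_bound indS by blast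
  have cS: "card S = DIM('a)"
    using dim_eq_card[of S UNIV] indS spS by simp
  have "range N = N ` span S" using spS by simp
  also have "\<dots> = span (N ` S)" using linear_span_image[OF lin] by simp
  also have "N ` S = insert 0 (N ` (S - {z0}))" using zS z0 by auto
  finally have "range N = span (N ` (S - {z0}))" by (simp add: span_insert_0)
  then have "dim (range N) = dim (N ` (S - {z0}))" by simp
  also have "\<dots> \<le> card (N ` (S - {z0}))" using finS by (simp add: dim_le_card')
  also have "\<dots> \<le> card (S - {z0})" using finS by (simp add: card_image_le)
  also have "\<dots> < card S" using finS zS by (meson card_Diff1_less)
  finally show ?thesis using cS by simp
qed

lemma dot_transpose: "(transpose A *v x) \<bullet> (y::real^'n) = x \<bullet> ((A::real^'n^'m) *v y)"
  by (simp add: transpose_matrix_vector dot_lmul_matrix)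

lemma linN: "linear (\<lambda>z. (B *v z, transpose D *v (z::real^'m)))"
proof -
  have l1: "linear ((*v) B)" and l2: "linear ((*v) (transpose D))" by (rule matrix_vector_mul_linear)+
  show ?thesis unfolding linear_iff
    using linear_add[OF l1] linear_add[OF l2] linear_scale[OF l1] linear_scale[OF l2] by simp
qed

lemma dim_orth: "subspace S \<Longrightarrow> dim (orthogonal_comp (S::'a::euclidean_space set)) + dim S = DIM('a)"
proof -
  assume "subspace S"
  then have "dim {y \<in> UNIV. \<forall>x \<in> S. orthogonal x y} + dim S = dim (UNIV::'a set)"
    by (intro dim_subspace_orthogonal_to_vectors) auto
  moreover have "{y \<in> UNIV. \<forall>x \<in> S. orthogonal x y} = orthogonal_comp S"
    by (auto simp: orthogonal_comp_def)
  ultimately show ?thesis by simp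
qed

lemma pairN: "pairing (B *v z, transpose D *v z) (B *v w, transpose D *v w)
   = 1/2 * (w \<bullet> ((D ** B + transpose B ** transpose D) *v z))"
proof -
  have a: "(transpose D *v w) \<bullet> (B *v z) = w \<bullet> ((D ** B) *v z)"
    by (simp only: dot_transpose matrix_vector_mul_assoc)
  have b: "(transpose D *v z) \<bullet> (B *v w) = w \<bullet> ((transpose B ** transpose D) *v z)"
  proof -
    have "w \<bullet> ((transpose B ** transpose D) *v z) = (transpose B *v (transpose D *v z)) \<bullet> w"
      by (simp only: matrix_vector_mul_assoc inner_commute)
    also have "\<dots> = (transpose D *v z) \<bullet> (B *v w)" by (rule dot_transpose)
    finally show ?thesis by simp
  qed
  show ?thesis unfolding pairing_def fst_conv snd_conv a b
    by (simp add: matrix_vector_mult_add_rdistrib inner_add_right)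
qed

lemma iso_iff: "(\<forall>z w. pairing (B *v z, transpose D *v z) (B *v w, transpose D *v w) = 0)
   \<longleftrightarrow> D ** B + transpose B ** transpose D = 0"
proof
  assume h: "\<forall>z w. pairing (B *v z, transpose D *v z) (B *v w, transpose D *v w) = 0"
  let ?M = "D ** B + transpose B ** transpose D"
  have "?M *v z = 0" for z
  proof -
    have "pairing (B *v z, transpose D *v z) (B *v (?M *v z), transpose D *v (?M *v z)) = 0"
      using h by blast
    then have "1/2 * ((?M *v z) \<bullet> (?M *v z)) = 0" by (simp only: pairN)
    then show ?thesis by simp
  qed
  then show "?M = 0" by (simp add: matrix_eq)
next
  assume "D ** B + transpose B ** transpose D = 0"
  then show "\<forall>z w. pairing (B *v z, transpose D *v z) (B *v w, transpose D *v w) = 0"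
    by (simp only: pairN) simp
qed


lemma perp_swap:
  fixes V :: "((real^'m) \<times> (real^'m)) set"
  shows "{w. \<forall>v\<in>V. pairing w v = 0} = (\<lambda>w. (snd w, fst w)) ` (orthogonal_comp V)"
proof -
  have key: "pairing w v = 0 \<longleftrightarrow> orthogonal v (snd w, fst w)" for w v :: "(real^'m) \<times> (real^'m)"
  proof -
    obtain a b where "w = (a, b)" by fastforce
    moreover obtain c d where "v = (c, d)" by fastforce
    ultimately show ?thesis
      by (simp add: pairing_def orthogonal_def inner_Pair inner_commute add.commute)
  qed
  show ?thesis
  proof (intro set_eqI iffI)
    fix w assume "w \<in> {w. \<forall>v\<in>V. pairing w v = 0}"
    then have "(snd w, fst w) \<in> orthogonal_comp V"
      using key by (auto simp: orthogonal_comp_def)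
    then show "w \<in> (\<lambda>w. (snd w, fst w)) ` (orthogonal_comp V)"
      by (rule rev_image_eqI) simp
  next
    fix w assume "w \<in> (\<lambda>w. (snd w, fst w)) ` (orthogonal_comp V)"
    then obtain y where y: "y \<in> orthogonal_comp V" "w = (snd y, fst y)" by blast
    then show "w \<in> {w. \<forall>v\<in>V. pairing w v = 0}"
      using key by (auto simp: orthogonal_comp_def)
  qed
qed

lemma lin_swap: "linear (\<lambda>w::('a::real_vector) \<times> 'a. (snd w, fst w))"
  by (auto simp: linear_iff)

lemma perp_props:
  fixes V :: "((real^'m) \<times> (real^'m)) set"
  assumes "subspace V"
  shows "subspace {w. \<forall>v\<in>V. pairing w v = 0}"
    and "dim {w. \<forall>v\<in>V. pairing w v = 0} + dim V = DIM(real^'m) + DIM(real^'m)"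
proof -
  show "subspace {w. \<forall>v\<in>V. pairing w v = 0}"
    unfolding perp_swap using lin_swap subspace_orthogonal_comp by (rule linear_subspace_image)
  have "inj (\<lambda>w::(real^'m) \<times> (real^'m). (snd w, fst w))" by (auto simp: inj_on_def)
  then have "dim ((\<lambda>w::(real^'m) \<times> (real^'m). (snd w, fst w)) ` orthogonal_comp V) = dim (orthogonal_comp V)"
    using lin_swap by (intro dim_image_eq) (auto simp: inj_on_def)
  then show "dim {w. \<forall>v\<in>V. pairing w v = 0} + dim V = DIM(real^'m) + DIM(real^'m)"
    unfolding perp_swap using dim_orth[OF assms] by simp
qed


theorem lemma4p4:
  fixes B D :: "real^'m^'m" and f :: "real^'m \<Rightarrow> real"
    and L :: "real^'m \<Rightarrow> ((real^'m) \<times> (real^'m)) set"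
  assumes "smooth_fun f"
    and "\<forall>u. f u \<noteq> 0"
    and "\<forall>u. L u = {(f u *\<^sub>R (B *v z), f u *\<^sub>R (transpose D *v z)) | z. True}"
  shows "(big_isotropic L \<longleftrightarrow> D ** B + transpose B ** transpose D = 0)
       \<and> (dirac L \<longleftrightarrow> (D ** B + transpose B ** transpose D = 0
                         \<and> {z. B *v z = 0} \<inter> {z. transpose D *v z = 0} = {0}))"
proof -
  define N where "N = (\<lambda>z::real^'m. (B *v z, transpose D *v z))"
  define V where "V = range N"
  define M where "M = D ** B + transpose B ** transpose D"
  define P where "P = {w. \<forall>v\<in>V. pairing w v = 0}"
  have linN': "linear N" unfolding N_def by (rule linN)
  have LV: "L = (\<lambda>u. V)"
  proof
    fix u
    have fu: "f u \<noteq> 0" using assms(2) by blast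
    show "L u = V"
    proof (intro set_eqI iffI)
      fix x assume "x \<in> L u"
      then obtain z where "x = (f u *\<^sub>R (B *v z), f u *\<^sub>R (transpose D *v z))" using assms(3) by auto
      then have "x = N (f u *\<^sub>R z)" unfolding N_def by (simp only: matrix_vector_mult_scaleR)
      then show "x \<in> V" unfolding V_def by blast
    next
      fix x assume "x \<in> V"
      then obtain z where z: "x = N z" unfolding V_def by blast
      have "x = (f u *\<^sub>R (B *v (inverse (f u) *\<^sub>R z)), f u *\<^sub>R (transpose D *v (inverse (f u) *\<^sub>R z)))"
        unfolding z N_def by (simp only: matrix_vector_mult_scaleR scaleR_scaleR right_inverse[OF fu] scaleR_one)
      then show "x \<in> L u" using assms(3) by auto
    qed
  qed
  have subV: "subspace V" unfolding V_def using linN' subspace_UNIV by (rule linear_subspace_image)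
  have perpP: "perp (\<lambda>u. V) u = P" for u unfolding perp_def P_def by simp
  have isoV: "(V \<subseteq> P) \<longleftrightarrow> M = 0"
  proof -
    have "(V \<subseteq> P) \<longleftrightarrow> (\<forall>z w. pairing (N z) (N w) = 0)"
      unfolding V_def P_def by auto
    then show ?thesis unfolding N_def M_def using iso_iff by simp
  qed
  have iso2: "M = 0 \<Longrightarrow> v \<in> V \<Longrightarrow> w \<in> V \<Longrightarrow> pairing v w = 0" for v w
    using isoV unfolding P_def by blast
  have lsub: "linear_subbundle (\<lambda>u. V)"
    unfolding linear_subbundle_def
  proof (intro conjI allI ballI exI)
    fix u w assume "w \<in> V"
    show "is_section (\<lambda>u. V) (\<lambda>x. w)"
      using \<open>w \<in> V\<close> unfolding is_section_def smooth_sec_def smooth_vec_def by (simp add: smooth_const)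
  qed (auto simp: subV)
  have cc: "M = 0 \<Longrightarrow> courant_closed (\<lambda>u. V)"
    unfolding courant_closed_def is_section_def
    using courant_in_V[OF subV iso2] smooth_courant by blast
  have big: "big_isotropic L \<longleftrightarrow> M = 0"
    unfolding LV big_isotropic_def isotropic_def perpP using lsub cc isoV by blast
  have injc: "{z. B *v z = 0} \<inter> {z. transpose D *v z = 0} = {0} \<longleftrightarrow> inj N"
  proof -
    have n0: "N z = 0 \<longleftrightarrow> B *v z = 0 \<and> transpose D *v z = 0" for z
      unfolding N_def by (simp only: zero_prod_def prod.inject)
    have "{z. B *v z = 0} \<inter> {z. transpose D *v z = 0} = {0} \<longleftrightarrow>
        (\<forall>z. B *v z = 0 \<and> transpose D *v z = 0 \<longrightarrow> z = 0)"
    proof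
      assume "{z. B *v z = 0} \<inter> {z. transpose D *v z = 0} = {0}"
      then show "\<forall>z. B *v z = 0 \<and> transpose D *v z = 0 \<longrightarrow> z = 0" by blast
    next
      assume "\<forall>z. B *v z = 0 \<and> transpose D *v z = 0 \<longrightarrow> z = 0"
      moreover have "B *v 0 = 0" "transpose D *v 0 = 0" by (rule matrix_vector_mult_0_right)+
      ultimately show "{z. B *v z = 0} \<inter> {z. transpose D *v z = 0} = {0}" by blast
    qed
    then show ?thesis unfolding linear_injective_0[OF linN'] n0 .
  qed
  have pp: "subspace P" "dim P + dim V = DIM(real^'m) + DIM(real^'m)"
    unfolding P_def using perp_props[OF subV] by auto
  have maxi: "(V = P) \<longleftrightarrow> M = 0 \<and> inj N"
  proof
    assume VP: "V = P"
    then have M0: "M = 0" using isoV by blast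
    have "dim V = DIM(real^'m)" using pp(2) VP by simp
    then have "inj N" using noninj_dim[OF linN'] unfolding V_def by fastforce
    then show "M = 0 \<and> inj N" using M0 by blast
  next
    assume h: "M = 0 \<and> inj N"
    have VsP: "V \<subseteq> P" using h isoV by blast
    have "dim V = dim (UNIV :: (real^'m) set)"
      unfolding V_def using h linN' by (intro dim_image_eq) (auto simp: inj_on_def inj_def)
    then have dV: "dim V = DIM(real^'m)" by simp
    then have "dim P \<le> dim V" using pp(2) by simp
    then show "V = P" using subspace_dim_equal[OF subV pp(1) VsP] by blast
  qed
  have dir: "dirac L \<longleftrightarrow> M = 0 \<and> inj N"
    unfolding LV dirac_def maximal_isotropic_def perpP using lsub cc maxi by blast
  show ?thesis using big dir injc unfolding M_def by blast
qed

end
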